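(* Let $\varphi$ be an Orlicz $N$-function with Young–Fenchel transform $\psi$. Let $\{X_{k,n},k\ge1,n\ge1\}$ be a double array of $\varphi$-subgaussian random variables, let $g$ be a positive non-decreasing function, set $a_{m,j}=g(\ln(mj))\psi^{-1}(\ln(mj))$, $Y_{m,j}=\max_{1\le k\le m,1\le n\le j}X_{k,n}-a_{m,j}$ and $Y^+_{m,j}=\max(Y_{m,j},0)$. Suppose there is a positive-valued function $f$ such that for all $m,j\ge1$, $1\le k\le m$, $1\le n\le j$, $$\frac{g(\ln(mj))}{\tau_\varphi(X_{k,n})}\ge f\left(\frac{mj}{kn}\right)\ge1,$$ and $f(x)\ge c_0>0$ for all $x\ge1$. Then for every $\alpha>2-c_0$, $$\sum_{m=1}^\infty\sum_{j=1}^\infty(mj)^{-\alpha}P(Y^+_{m,j}>0)<+\infty.$$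
   Context: An Orlicz $N$-function is a continuous even convex function $\varphi:\mathbb R\to\mathbb R$ with $\varphi(0)=0$, increasing on $(0,\infty)$, with $\varphi(x)/x\to0$ as $x\to0$ and $\varphi(x)/x\to+\infty$ as $x\to+\infty$. The Young–Fenchel transform is $\psi(x)=\sup_{y\in\mathbb R}(xy-\varphi(y))$; $\psi^{-1}$ is the inverse of $\psi$ on $[0,\infty)$. A random variable $X$ is $\varphi$-subgaussian if $EX=0$ and there is a finite $a>0$ with $E\exp(tX)\le\exp(\varphi(at))$ for all $t$; $\tau_\varphi(X)=\inf\{a>0:E\exp(tX)\le\exp(\varphi(at))\ \forall t\}$. *)

theory Defs
  imports "HOL-Probability.Probability"
begin

definition N_function :: "(real \<Rightarrow> real) \<Rightarrow> bool" where
  "N_function \<phi> \<longleftrightarrow>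
     continuous_on UNIV \<phi> \<and>
     (\<forall>x. \<phi> (- x) = \<phi> x) \<and>
     convex_on UNIV \<phi> \<and>
     \<phi> 0 = 0 \<and>
     strict_mono_on {0<..} \<phi> \<and>
     ((\<lambda>x. \<phi> x / x) \<longlongrightarrow> 0) (at 0) \<and>
     filterlim (\<lambda>x. \<phi> x / x) at_top at_top"

definition young_fenchel :: "(real \<Rightarrow> real) \<Rightarrow> real \<Rightarrow> real" where
  "young_fenchel \<phi> x = (SUP y. x * y - \<phi> y)"

definition young_fenchel_inv :: "(real \<Rightarrow> real) \<Rightarrow> real \<Rightarrow> real" where
  "young_fenchel_inv \<phi> t = (THE x. 0 \<le> x \<and> young_fenchel \<phi> x = t)"

definition mgf_bound :: "'a measure \<Rightarrow> (real \<Rightarrow> real) \<Rightarrow> ('a \<Rightarrow> real) \<Rightarrow> real \<Rightarrow> bool" where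
  "mgf_bound M \<phi> X a \<longleftrightarrow>
     (\<forall>t. (\<integral>\<^sup>+ \<omega>. ennreal (exp (t * X \<omega>)) \<partial>M) \<le> ennreal (exp (\<phi> (a * t))))"

definition phi_subgaussian :: "'a measure \<Rightarrow> (real \<Rightarrow> real) \<Rightarrow> ('a \<Rightarrow> real) \<Rightarrow> bool" where
  "phi_subgaussian M \<phi> X \<longleftrightarrow>
     X \<in> borel_measurable M \<and> integrable M X \<and> (\<integral>\<omega>. X \<omega> \<partial>M) = 0 \<and>
     (\<exists>a>0. mgf_bound M \<phi> X a)"

definition tau_phi :: "'a measure \<Rightarrow> (real \<Rightarrow> real) \<Rightarrow> ('a \<Rightarrow> real) \<Rightarrow> real" where
  "tau_phi M \<phi> X = Inf {a. a > 0 \<and> mgf_bound M \<phi> X a}"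

definition array_max :: "(nat \<Rightarrow> nat \<Rightarrow> 'a \<Rightarrow> real) \<Rightarrow> nat \<Rightarrow> nat \<Rightarrow> 'a \<Rightarrow> real" where
  "array_max X m j \<omega> = Max {X k n \<omega> | k n. 1 \<le> k \<and> k \<le> m \<and> 1 \<le> n \<and> n \<le> j}"

end

theory Submission
  imports Defs
begin

lemma phi_nonneg:
  assumes "N_function \<phi>" shows "\<phi> y \<ge> 0"
proof -
  have c: "convex_on UNIV \<phi>" and e: "\<phi> (- y) = \<phi> y" and z: "\<phi> 0 = 0"
    using assms unfolding N_function_def by auto
  have "\<phi> ((1 - 1/2) *\<^sub>R y + (1/2) *\<^sub>R (-y)) \<le> (1 - 1/2) * \<phi> y + (1/2) * \<phi> (-y)"
    by (rule convex_onD[OF c]) auto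
  then show ?thesis using e z by simp
qed

lemma phi_mono:
  assumes "N_function \<phi>" "\<bar>x\<bar> \<le> \<bar>y\<bar>" shows "\<phi> x \<le> \<phi> y"
proof -
  have e: "\<And>z. \<phi> (- z) = \<phi> z" and sm: "strict_mono_on {0<..} \<phi>" and z: "\<phi> 0 = 0"
    using assms(1) unfolding N_function_def by auto
  have a: "\<phi> z = \<phi> \<bar>z\<bar>" for z using e[of z] by (cases "z \<ge> 0") auto
  show ?thesis
  proof (cases "\<bar>x\<bar> = 0")
    case True then show ?thesis using z phi_nonneg[OF assms(1)] a by simp
  next
    case False
    have "\<phi> \<bar>x\<bar> \<le> \<phi> \<bar>y\<bar>"
    proof (cases "\<bar>x\<bar> = \<bar>y\<bar>")
      case False
      then have "\<bar>x\<bar> < \<bar>y\<bar>" using assms(2) by simp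
      moreover have "\<bar>x\<bar> \<in> {0<..}" "\<bar>y\<bar> \<in> {0<..}" using \<open>\<bar>x\<bar> \<noteq> 0\<close> assms(2) by auto
      ultimately have "\<phi> \<bar>x\<bar> < \<phi> \<bar>y\<bar>" by (intro strict_mono_onD[OF sm])
      then show ?thesis by simp
    qed simp
    then show ?thesis using a[of x] a[of y] by simp
  qed
qed

lemma yf_bdd:
  assumes "N_function \<phi>" shows "bdd_above (range (\<lambda>y. x * y - \<phi> y))"
proof -
  have e: "\<And>z. \<phi> (- z) = \<phi> z" and lim: "filterlim (\<lambda>x. \<phi> x / x) at_top at_top"
    using assms(1) unfolding N_function_def by auto
  have "eventually (\<lambda>y. \<phi> y / y \<ge> \<bar>x\<bar>) at_top"
    using lim by (simp add: filterlim_at_top)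
  then obtain R where R: "\<And>y. y \<ge> R \<Longrightarrow> \<phi> y / y \<ge> \<bar>x\<bar>"
    by (auto simp: eventually_at_top_linorder)
  define R' where "R' = max R 1"
  have a: "\<phi> z = \<phi> \<bar>z\<bar>" for z using e[of z] by (cases "z \<ge> 0") auto
  have bnd: "x * y - \<phi> y \<le> \<bar>x\<bar> * R'" for y
  proof (cases "\<bar>y\<bar> \<ge> R'")
    case True
    then have "\<phi> \<bar>y\<bar> / \<bar>y\<bar> \<ge> \<bar>x\<bar>" "\<bar>y\<bar> > 0" using R[of "\<bar>y\<bar>"] by (auto simp: R'_def)
    then have "\<phi> \<bar>y\<bar> \<ge> \<bar>x\<bar> * \<bar>y\<bar>" by (simp add: pos_le_divide_eq)
    moreover have "x * y \<le> \<bar>x\<bar> * \<bar>y\<bar>" by (simp add: abs_mult[symmetric])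
    moreover have "0 \<le> \<bar>x\<bar> * R'" by (simp add: R'_def)
    ultimately show ?thesis using a[of y] by linarith
  next
    case False
    have "x * y \<le> \<bar>x\<bar> * \<bar>y\<bar>" by (simp add: abs_mult[symmetric])
    also have "\<dots> \<le> \<bar>x\<bar> * R'" using False by (intro mult_left_mono) auto
    finally have "x * y \<le> \<bar>x\<bar> * R'" .
    then show ?thesis using phi_nonneg[OF assms, of y] by linarith
  qed
  show ?thesis by (rule bdd_aboveI2[where M="\<bar>x\<bar> * R'"]) (rule bnd)
qed

lemma yf_ge:
  assumes "N_function \<phi>" shows "x * y - \<phi> y \<le> young_fenchel \<phi> x"
  unfolding young_fenchel_def by (rule cSUP_upper[OF _ yf_bdd[OF assms]]) auto

lemma yf_le:
  assumes "\<And>y. x * y - \<phi> y \<le> B" shows "young_fenchel \<phi> x \<le> B"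
  unfolding young_fenchel_def by (rule cSUP_least) (auto intro: assms)

lemma yf_0: assumes "N_function \<phi>" shows "young_fenchel \<phi> 0 = 0"
proof (rule antisym)
  show "young_fenchel \<phi> 0 \<le> 0" by (rule yf_le) (simp add: phi_nonneg[OF assms])
  show "0 \<le> young_fenchel \<phi> 0" using yf_ge[OF assms, of 0 0] assms
    by (simp add: N_function_def)
qed

lemma yf_pos: assumes "N_function \<phi>" "x > 0" shows "young_fenchel \<phi> x > 0"
proof -
  have lim: "((\<lambda>x. \<phi> x / x) \<longlongrightarrow> 0) (at 0)" using assms(1) unfolding N_function_def by auto
  then have "eventually (\<lambda>y. \<phi> y / y < x) (at 0)"
    using assms(2) by (auto dest: order_tendstoD)
  then have "eventually (\<lambda>y. \<phi> y / y < x) (at_right 0)"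
    by (simp add: eventually_at_split)
  then obtain b where b: "b > 0" "\<And>y. y > 0 \<Longrightarrow> y < b \<Longrightarrow> \<phi> y / y < x"
    by (auto simp: eventually_at_right_field)
  have "\<phi> (b/2) / (b/2) < x" by (rule b(2)) (use b(1) in auto)
  then have "\<phi> (b/2) < x * (b/2)" using b by (simp add: divide_less_eq)
  then show ?thesis using yf_ge[OF assms(1), of x "b/2"] by linarith
qed

lemma yf_scale:
  assumes "N_function \<phi>" "c \<ge> 1" shows "young_fenchel \<phi> (c * u) \<ge> c * young_fenchel \<phi> u"
proof -
  have "young_fenchel \<phi> u \<le> young_fenchel \<phi> (c * u) / c"
  proof (rule yf_le)
    fix y
    have "c * (u * y - \<phi> y) \<le> (c * u) * y - \<phi> y"
      using phi_nonneg[OF assms(1), of y] assms(2) by (simp add: algebra_simps mult_le_cancel_right1)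
    also have "\<dots> \<le> young_fenchel \<phi> (c * u)" by (rule yf_ge[OF assms(1)])
    finally show "u * y - \<phi> y \<le> young_fenchel \<phi> (c * u) / c"
      using assms(2) by (simp add: le_divide_eq mult.commute)
  qed
  then show ?thesis using assms(2) by (simp add: le_divide_eq mult.commute)
qed

lemma yf_strict:
  assumes "N_function \<phi>" "0 \<le> a" "a < b" shows "young_fenchel \<phi> a < young_fenchel \<phi> b"
proof (cases "a = 0")
  case True then show ?thesis using yf_0[OF assms(1)] yf_pos[OF assms(1), of b] assms by simp
next
  case False
  then have ap: "a > 0" using assms by simp
  have "young_fenchel \<phi> ((b/a) * a) \<ge> (b/a) * young_fenchel \<phi> a"
    by (rule yf_scale[OF assms(1)]) (use ap assms in auto)
  then have "young_fenchel \<phi> b \<ge> (b/a) * young_fenchel \<phi> a" using ap by simp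
  moreover have "young_fenchel \<phi> a > 0" using yf_pos[OF assms(1) ap] .
  moreover have "b/a > 1" using ap assms by simp
  ultimately have "young_fenchel \<phi> a < (b/a) * young_fenchel \<phi> a"
    using mult_strict_right_mono[of 1 "b/a" "young_fenchel \<phi> a"] by simp
  with \<open>young_fenchel \<phi> b \<ge> (b/a) * young_fenchel \<phi> a\<close> show ?thesis by linarith
qed

lemma yf_convex: assumes "N_function \<phi>" shows "convex_on UNIV (young_fenchel \<phi>)"
proof (rule convex_onI)
  fix t x y :: real assume t: "t > 0" "t < 1"
  show "young_fenchel \<phi> ((1 - t) *\<^sub>R x + t *\<^sub>R y) \<le> (1 - t) * young_fenchel \<phi> x + t * young_fenchel \<phi> y"
  proof (rule yf_le)
    fix z
    have "((1 - t) *\<^sub>R x + t *\<^sub>R y) * z - \<phi> z = (1 - t) * (x * z - \<phi> z) + t * (y * z - \<phi> z)"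
      by (simp add: algebra_simps)
    also have "\<dots> \<le> (1 - t) * young_fenchel \<phi> x + t * young_fenchel \<phi> y"
      using t yf_ge[OF assms, of x z] yf_ge[OF assms, of y z]
      by (intro add_mono mult_left_mono) auto
    finally show "((1 - t) *\<^sub>R x + t *\<^sub>R y) * z - \<phi> z \<le> (1 - t) * young_fenchel \<phi> x + t * young_fenchel \<phi> y" .
  qed
qed auto

lemma yf_cont: assumes "N_function \<phi>" shows "continuous_on UNIV (young_fenchel \<phi>)"
  by (rule convex_on_continuous[OF _ yf_convex[OF assms]]) auto

lemma yf_inv:
  assumes "N_function \<phi>" "L \<ge> 0"
  shows "young_fenchel_inv \<phi> L \<ge> 0 \<and> young_fenchel \<phi> (young_fenchel_inv \<phi> L) = L"
proof -
  have "\<exists>x. 0 \<le> x \<and> x \<le> L + \<phi> 1 \<and> young_fenchel \<phi> x = L"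
  proof (rule IVT')
    show "young_fenchel \<phi> 0 \<le> L" using yf_0[OF assms(1)] assms by simp
    show "L \<le> young_fenchel \<phi> (L + \<phi> 1)" using yf_ge[OF assms(1), of "L + \<phi> 1" 1] by simp
    show "0 \<le> L + \<phi> 1" using assms phi_nonneg[OF assms(1), of 1] by simp
    show "continuous_on {0..L + \<phi> 1} (young_fenchel \<phi>)"
      using yf_cont[OF assms(1)] by (rule continuous_on_subset) auto
  qed
  then obtain x where x: "0 \<le> x" "young_fenchel \<phi> x = L" by blast
  have "(THE x. 0 \<le> x \<and> young_fenchel \<phi> x = L) = x"
  proof (rule the_equality)
    show "0 \<le> x \<and> young_fenchel \<phi> x = L" using x by simp
    fix y assume y: "0 \<le> y \<and> young_fenchel \<phi> y = L"
    show "y = x"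
    proof (rule ccontr)
      assume "y \<noteq> x"
      then consider "y < x" | "x < y" by linarith
      then show False
      proof cases
        case 1 then have "young_fenchel \<phi> y < young_fenchel \<phi> x" using y by (intro yf_strict[OF assms(1)]) auto
        then show False using x y by simp
      next
        case 2 then have "young_fenchel \<phi> x < young_fenchel \<phi> y" using x by (intro yf_strict[OF assms(1)]) auto
        then show False using x y by simp
      qed
    qed
  qed
  then show ?thesis using x unfolding young_fenchel_inv_def by simp
qed



lemma mgf_mono:
  assumes "N_function \<phi>" "mgf_bound M \<phi> X a" "0 \<le> a" "a \<le> b"
  shows "mgf_bound M \<phi> X b"
  unfolding mgf_bound_def
proof
  fix t
  have "\<phi> (a * t) \<le> \<phi> (b * t)"
    by (rule phi_mono[OF assms(1)]) (use assms(3,4) in \<open>auto simp: abs_mult intro: mult_right_mono\<close>)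
  then have "ennreal (exp (\<phi> (a * t))) \<le> ennreal (exp (\<phi> (b * t)))" by simp
  then show "(\<integral>\<^sup>+ \<omega>. ennreal (exp (t * X \<omega>)) \<partial>M) \<le> ennreal (exp (\<phi> (b * t)))"
    using assms(2) unfolding mgf_bound_def by (meson order_trans)
qed

lemma tau_gt:
  assumes "N_function \<phi>" "phi_subgaussian M \<phi> X" "b > tau_phi M \<phi> X"
  shows "mgf_bound M \<phi> X b"
proof -
  let ?S = "{a. a > 0 \<and> mgf_bound M \<phi> X a}"
  have ne: "?S \<noteq> {}" using assms(2) unfolding phi_subgaussian_def by auto
  have "Inf ?S < b" using assms(3) unfolding tau_phi_def .
  then obtain a where "a \<in> ?S" "a < b" using cInf_lessD[OF ne] by blast
  then show ?thesis using mgf_mono[OF assms(1), of M X a b] by auto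
qed

lemma tau_attained:
  assumes "N_function \<phi>" "phi_subgaussian M \<phi> X" "tau_phi M \<phi> X > 0"
  shows "mgf_bound M \<phi> X (tau_phi M \<phi> X)"
  unfolding mgf_bound_def
proof
  fix t
  let ?\<tau> = "tau_phi M \<phi> X"
  have cont: "continuous_on UNIV \<phi>" using assms(1) unfolding N_function_def by auto
  have ic: "isCont \<phi> (?\<tau> * t)" using cont by (simp add: continuous_on_eq_continuous_at)
  have "((\<lambda>b. b * t) \<longlongrightarrow> ?\<tau> * t) (at_right ?\<tau>)"
    by (intro tendsto_intros)
  then have "((\<lambda>b. \<phi> (b * t)) \<longlongrightarrow> \<phi> (?\<tau> * t)) (at_right ?\<tau>)"
    by (rule isCont_tendsto_compose[OF ic])
  then have lim: "((\<lambda>b. ennreal (exp (\<phi> (b * t)))) \<longlongrightarrow> ennreal (exp (\<phi> (?\<tau> * t)))) (at_right ?\<tau>)"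
    by (intro tendsto_ennrealI tendsto_exp)
  have ev: "eventually (\<lambda>b. (\<integral>\<^sup>+ \<omega>. ennreal (exp (t * X \<omega>)) \<partial>M) \<le> ennreal (exp (\<phi> (b * t)))) (at_right ?\<tau>)"
    using eventually_at_right_less[of ?\<tau>]
    by eventually_elim (use tau_gt[OF assms(1,2)] in \<open>auto simp: mgf_bound_def\<close>)
  show "(\<integral>\<^sup>+ \<omega>. ennreal (exp (t * X \<omega>)) \<partial>M) \<le> ennreal (exp (\<phi> (?\<tau> * t)))"
    by (rule tendsto_lowerbound[OF lim ev]) simp
qed

lemma chernoff:
  assumes P: "prob_space M" and N: "N_function \<phi>" and Xm: "X \<in> borel_measurable M"
    and b: "b > 0" and mg: "mgf_bound M \<phi> X b" and a: "a \<ge> 0"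
  shows "measure M {\<omega> \<in> space M. X \<omega> > a} \<le> exp (- young_fenchel \<phi> (a / b))"
proof -
  interpret prob_space M by (rule P)
  have [measurable]: "X \<in> borel_measurable M" by (rule Xm)
  define A where "A = {\<omega> \<in> space M. X \<omega> > a}"
  have As: "A \<in> sets M" unfolding A_def by measurable
  define p where "p = measure M A"
  have key: "p \<le> exp (\<phi> s - s * (a / b))" for s
  proof (cases "s > 0")
    case False
    have "p \<le> 1" unfolding p_def by (rule prob_le_1)
    have "s * (a / b) \<le> 0" using False a b by (intro mult_nonpos_nonneg) auto
    then have "1 \<le> exp (\<phi> s - s * (a / b))"
      using phi_nonneg[OF N, of s] by simp
    with \<open>p \<le> 1\<close> show ?thesis by linarith
  next
    case True
    define t where "t = s / b"
    have t: "t > 0" using True b by (simp add: t_def)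
    have "emeasure M A = (\<integral>\<^sup>+ \<omega>. indicator A \<omega> \<partial>M)" using As by simp
    also have "\<dots> \<le> (\<integral>\<^sup>+ \<omega>. ennreal (exp (- t * a)) * ennreal (exp (t * X \<omega>)) \<partial>M)"
    proof (rule nn_integral_mono)
      fix \<omega> assume "\<omega> \<in> space M"
      show "indicator A \<omega> \<le> ennreal (exp (- t * a)) * ennreal (exp (t * X \<omega>))"
      proof (cases "\<omega> \<in> A")
        case True
        then have "X \<omega> > a" by (simp add: A_def)
        then have "1 \<le> exp (- t * a) * exp (t * X \<omega>)"
          using t by (simp add: exp_add[symmetric] algebra_simps)
        then show ?thesis using True by (simp add: ennreal_mult[symmetric])
      qed simp
    qed
    also have "\<dots> = ennreal (exp (- t * a)) * (\<integral>\<^sup>+ \<omega>. ennreal (exp (t * X \<omega>)) \<partial>M)"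
      by (rule nn_integral_cmult) measurable
    also have "\<dots> \<le> ennreal (exp (- t * a)) * ennreal (exp (\<phi> (b * t)))"
      using mg unfolding mgf_bound_def by (intro mult_left_mono) auto
    also have "\<dots> = ennreal (exp (\<phi> s - s * (a / b)))"
      using b by (simp add: t_def ennreal_mult[symmetric] exp_add[symmetric] algebra_simps)
    finally have "ennreal p \<le> ennreal (exp (\<phi> s - s * (a / b)))"
      by (simp add: p_def emeasure_eq_measure)
    then show ?thesis by simp
  qed
  show ?thesis
  proof (cases "p = 0")
    case True then show ?thesis by (simp add: p_def A_def)
  next
    case False
    then have pp: "p > 0" unfolding p_def using measure_nonneg[of M A] by linarith
    have "young_fenchel \<phi> (a / b) \<le> - ln p"
    proof (rule yf_le)
      fix y
      have "ln p \<le> \<phi> y - y * (a / b)"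
        using key[of y] pp by (metis ln_exp ln_le_cancel_iff exp_gt_zero)
      then show "a / b * y - \<phi> y \<le> - ln p" by (simp add: algebra_simps)
    qed
    then have "exp (ln p) \<le> exp (- young_fenchel \<phi> (a / b))" by (simp only: exp_le_cancel_iff)
    moreover have "exp (ln p) = p" using pp by simp
    ultimately have "p \<le> exp (- young_fenchel \<phi> (a / b))" by linarith
    then show ?thesis by (simp add: p_def A_def)
  qed
qed



lemma tail_term:
  assumes P: "prob_space M" and N: "N_function \<phi>" and sg: "phi_subgaussian M \<phi> Y"
    and G: "G > 0" and F: "F \<ge> 1" and FG: "F * tau_phi M \<phi> Y \<le> G" and L: "L \<ge> 0"
  shows "measure M {\<omega> \<in> space M. Y \<omega> > G * young_fenchel_inv \<phi> L} \<le> exp (- (F * L))"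
proof -
  define b where "b = G / F"
  have bp: "b > 0" using G F by (simp add: b_def)
  have bt: "tau_phi M \<phi> Y \<le> b" using FG F by (simp add: b_def le_divide_eq mult.commute)
  have mg: "mgf_bound M \<phi> Y b"
  proof (cases "tau_phi M \<phi> Y < b")
    case True then show ?thesis using tau_gt[OF N sg] by blast
  next
    case False
    then have "b = tau_phi M \<phi> Y" using bt by simp
    then show ?thesis using tau_attained[OF N sg] bp by simp
  qed
  define u where "u = young_fenchel_inv \<phi> L"
  have u: "u \<ge> 0" "young_fenchel \<phi> u = L" using yf_inv[OF N L] by (auto simp: u_def)
  have Xm: "Y \<in> borel_measurable M" using sg by (simp add: phi_subgaussian_def)
  have "measure M {\<omega> \<in> space M. Y \<omega> > G * u} \<le> exp (- young_fenchel \<phi> (G * u / b))"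
    by (rule chernoff[OF P N Xm bp mg]) (use G u in simp)
  also have "G * u / b = F * u" using G F by (simp add: b_def)
  also have "exp (- young_fenchel \<phi> (F * u)) \<le> exp (- (F * L))"
    using yf_scale[OF N F, of u] u by simp
  finally show ?thesis by (simp add: u_def)
qed

lemma summable_powr_prod:
  fixes \<beta> :: real assumes "\<beta> > 1"
  shows "(\<lambda>(m::nat, j::nat). real m powr (- \<beta>) * real j powr (- \<beta>)) summable_on ({1..} \<times> {1..})"
proof -
  define h where "h n = real n powr (- \<beta>)" for n :: nat
  have "summable h" unfolding h_def using assms by (subst summable_real_powr_iff) simp
  then have "h summable_on UNIV" by (subst summable_on_UNIV_nonneg_real_iff) (auto simp: h_def)
  then have hs: "h summable_on {1..}" by (rule summable_on_subset) auto
  then have hS: "(h has_sum infsum h {1..}) {1..}" by (rule summable_iff_has_sum_infsum[THEN iffD1])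
  have "(\<lambda>(m, j). h m * h j) summable_on Sigma {1..} (\<lambda>_. {1..})"
  proof (rule summable_on_SigmaI[where g = "\<lambda>m. h m * infsum h {1..}"])
    fix m :: nat assume "m \<in> {1..}"
    show "((\<lambda>j. case (m, j) of (m, j) \<Rightarrow> h m * h j) has_sum h m * infsum h {1..}) {1..}"
      using has_sum_cmult_right[OF hS, of "h m"] by simp
  next
    show "(\<lambda>m. h m * infsum h {1..}) summable_on {1..}"
      using hs by (rule summable_on_cmult_left)
  next
    fix x y :: nat show "0 \<le> (case (x, y) of (m, j) \<Rightarrow> h m * h j)" by (simp add: h_def)
  qed
  then show ?thesis by (simp add: h_def)
qed



theorem corollary3:
  fixes M :: "'a measure" and \<phi> g f :: "real \<Rightarrow> real" and c0 \<alpha> :: real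
    and X :: "nat \<Rightarrow> nat \<Rightarrow> 'a \<Rightarrow> real"
  assumes "prob_space M"
    and "N_function \<phi>"
    and "\<And>k n. 1 \<le> k \<Longrightarrow> 1 \<le> n \<Longrightarrow> phi_subgaussian M \<phi> (X k n)"
    and "\<And>x. 0 \<le> x \<Longrightarrow> g x > 0"
    and "mono_on {0..} g"
    and "\<And>x. 1 \<le> x \<Longrightarrow> f x > 0"
    and "\<And>m j k n. 1 \<le> k \<Longrightarrow> k \<le> m \<Longrightarrow> 1 \<le> n \<Longrightarrow> n \<le> j \<Longrightarrow>
           f (real (m * j) / real (k * n)) * tau_phi M \<phi> (X k n) \<le> g (ln (real (m * j)))
         \<and> f (real (m * j) / real (k * n)) \<ge> 1"
    and "c0 > 0"
    and "\<And>x. 1 \<le> x \<Longrightarrow> f x \<ge> c0"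
    and "\<alpha> > 2 - c0"
  shows "(\<lambda>(m, j). real (m * j) powr (- \<alpha>) *
            measure M {\<omega> \<in> space M.
              max (array_max X m j \<omega> - g (ln (real (m * j))) * young_fenchel_inv \<phi> (ln (real (m * j)))) 0 > 0})
         summable_on ({1..} \<times> {1..})"
proof -
  note P = assms(1) and N = assms(2)
  interpret prob_space M by (rule P)
  define \<beta> where "\<beta> = \<alpha> + c0 - 1"
  have \<beta>: "\<beta> > 1" using assms(10) by (simp add: \<beta>_def)
  show ?thesis
  proof (rule summable_on_comparison_test[OF summable_powr_prod[OF \<beta>]])
    fix mj :: "nat \<times> nat" assume "mj \<in> {1..} \<times> {1..}"
    then obtain m j where mj: "mj = (m, j)" "m \<ge> 1" "j \<ge> 1" by auto
    define x where "x = real (m * j)"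
    have "1 \<le> m * j" using mj by (simp add: Suc_le_eq)
    then have x1: "x \<ge> 1" unfolding x_def by (metis of_nat_1 of_nat_le_iff)
    define L where "L = ln x"
    have L: "L \<ge> 0" using x1 by (simp add: L_def)
    define c where "c = g L * young_fenchel_inv \<phi> L"
    define I where "I = {1..m} \<times> {1..j}"
    define A where "A = (\<lambda>(k, n). {\<omega> \<in> space M. X k n \<omega> > c})"
    have sg: "phi_subgaussian M \<phi> (X k n)" if "(k, n) \<in> I" for k n
      using that assms(3) by (auto simp: I_def)
    have Asets: "A ` I \<subseteq> sets M"
    proof safe
      fix k n assume kn: "(k, n) \<in> I"
      have [measurable]: "X k n \<in> borel_measurable M" using sg[OF kn] by (simp add: phi_subgaussian_def)
      have "{\<omega> \<in> space M. X k n \<omega> > c} \<in> sets M" by measurable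
      then show "A (k, n) \<in> sets M" unfolding A_def by simp
    qed
    have sub: "{\<omega> \<in> space M. max (array_max X m j \<omega> - c) 0 > 0} \<subseteq> (\<Union>i\<in>I. A i)"
    proof safe
      fix \<omega> assume \<omega>: "\<omega> \<in> space M" "max (array_max X m j \<omega> - c) 0 > 0"
      define S where "S = {X k n \<omega> | k n. 1 \<le> k \<and> k \<le> m \<and> 1 \<le> n \<and> n \<le> j}"
      have S: "S = (\<lambda>(k, n). X k n \<omega>) ` I" by (auto simp: S_def I_def) blast
      have "finite S" "S \<noteq> {}" using S mj by (auto simp: I_def)
      then have "Max S \<in> S" by (rule Max_in)
      then obtain k n where kn: "(k, n) \<in> I" "Max S = X k n \<omega>" using S by auto
      have "array_max X m j \<omega> = Max S" by (simp add: array_max_def S_def)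
      then have "X k n \<omega> > c" using \<omega>(2) kn by simp
      then show "\<omega> \<in> (\<Union>i\<in>I. A i)" using kn \<omega>(1) by (auto simp: A_def)
    qed
    have each: "measure M (A i) \<le> x powr (- c0)" if "i \<in> I" for i
    proof -
      obtain k n where i: "i = (k, n)" by force
      have kn: "1 \<le> k" "k \<le> m" "1 \<le> n" "n \<le> j" using that i by (auto simp: I_def)
      define F where "F = f (real (m * j) / real (k * n))"
      have FF: "F * tau_phi M \<phi> (X k n) \<le> g L" "F \<ge> 1"
        using assms(7)[OF kn] by (auto simp: F_def L_def x_def)
      have r1: "real (m * j) / real (k * n) \<ge> 1"
        using kn by (simp add: mult_le_mono del: of_nat_mult)
      have Fc: "F \<ge> c0" using assms(9)[OF r1] by (simp add: F_def)
      have "measure M (A i) \<le> exp (- (F * L))"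
        unfolding A_def i c_def
        by (simp, rule tail_term[OF P N sg[OF that[unfolded i]] assms(4)[OF L] FF(2) FF(1) L])
      also have "exp (- (F * L)) = x powr (- F)" using x1 by (simp add: powr_def L_def)
      also have "\<dots> \<le> x powr (- c0)" using Fc x1 by (intro powr_mono) auto
      finally show ?thesis .
    qed
    have "measure M {\<omega> \<in> space M. max (array_max X m j \<omega> - c) 0 > 0} \<le> measure M (\<Union>i\<in>I. A i)"
      using sub Asets by (intro finite_measure_mono) (auto simp: I_def)
    also have "\<dots> \<le> (\<Sum>i\<in>I. measure M (A i))"
      by (rule finite_measure_subadditive_finite) (use Asets in \<open>auto simp: I_def\<close>)
    also have "\<dots> \<le> (\<Sum>i\<in>I. x powr (- c0))" by (rule sum_mono) (rule each)
    also have "\<dots> = x * x powr (- c0)" by (simp add: I_def x_def)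
    finally have meas: "measure M {\<omega> \<in> space M. max (array_max X m j \<omega> - c) 0 > 0} \<le> x * x powr (- c0)" .
    have "x powr (- \<alpha>) * measure M {\<omega> \<in> space M. max (array_max X m j \<omega> - c) 0 > 0}
          \<le> x powr (- \<alpha>) * (x * x powr (- c0))"
      using meas by (intro mult_left_mono) auto
    also have "\<dots> = x powr 1 * x powr (- \<alpha>) * x powr (- c0)"
      using x1 by simp
    also have "\<dots> = x powr (1 + (- \<alpha>) + (- c0))" by (simp only: powr_add)
    also have "\<dots> = x powr (- \<beta>)" by (simp add: \<beta>_def algebra_simps)
    also have "\<dots> = real m powr (- \<beta>) * real j powr (- \<beta>)"
      by (simp add: x_def powr_mult)
    finally show "(case mj of (m, j) \<Rightarrow> real (m * j) powr - \<alpha> *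
            measure M {\<omega> \<in> space M.
              max (array_max X m j \<omega> - g (ln (real (m * j))) * young_fenchel_inv \<phi> (ln (real (m * j)))) 0 > 0})
          \<le> (case mj of (m, j) \<Rightarrow> real m powr - \<beta> * real j powr - \<beta>)"
      using mj by (simp add: x_def c_def L_def)
  next
    fix mj :: "nat \<times> nat"
    show "0 \<le> (case mj of (m, j) \<Rightarrow> real (m * j) powr - \<alpha> *
            measure M {\<omega> \<in> space M.
              max (array_max X m j \<omega> - g (ln (real (m * j))) * young_fenchel_inv \<phi> (ln (real (m * j)))) 0 > 0})"
      by (cases mj) simp
  qed
qed


end
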